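(* Let $m,n\geq 0$ be integers. Then \[ \sum_{k=1}^{n}\frac{(-1)^k q^{\binom{k+1}{2}}}{(q;q)_k (q;q)_{n-k}(q^k;q)_{m+1}} -\sum_{k=1}^{m}\frac{(-1)^k q^{\binom{k+1}{2}}}{(q;q)_k (q;q)_{m-k}(q^k;q)_{n+1}} =\frac{1}{(q;q)_{m}(q;q)_{n}}\left(\sum_{k=1}^m\frac{q^k}{1-q^k}-\sum_{k=1}^n\frac{q^k}{1-q^k}\right). \]
   Context: For $N\geq 0$, $(x;q)_N=(1-x)(1-xq)\cdots(1-xq^{N-1})$ (with $(x;q)_0=1$). The identity is one of rational functions in $q$. *)

theory Defs
  imports Complex_Main
begin

definition qpoch :: "'a::comm_ring_1 \<Rightarrow> 'a \<Rightarrow> nat \<Rightarrow> 'a" where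
  "qpoch x q N = (\<Prod>i<N. 1 - x * q ^ i)"

end

theory Submission
  imports Defs
begin

lemma qp_Suc: "qpoch x q (Suc N) = qpoch x q N * (1 - x * q^N)"
  by (simp add: qpoch_def)

lemma Q_Suc: "qpoch q q (Suc j) = qpoch q q j * (1 - q^Suc j)"
  by (simp add: qp_Suc)

lemma Q_shift: "qpoch q q a * qpoch (q^(Suc a)) q b = qpoch q q (a+b)"
proof (induction b)
  case 0 then show ?case by (simp add: qpoch_def)
next
  case (Suc b)
  have "qpoch q q a * qpoch (q^(Suc a)) q (Suc b) = qpoch q q (a+b) * (1 - q^Suc a * q^b)"
    using Suc by (simp only: qp_Suc mult.assoc[symmetric])
  also have "\<dots> = qpoch q q (a + Suc b)" by (simp add: Q_Suc power_add mult.assoc)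
  finally show ?case .
qed

lemma Q_nz:
  fixes q :: "'a::field"
  assumes "\<And>k. 1 \<le> k \<Longrightarrow> k \<le> M \<Longrightarrow> q^k \<noteq> 1" "j \<le> M"
  shows "qpoch q q j \<noteq> 0"
proof -
  have "\<forall>i<j. 1 - q * q^i \<noteq> 0"
  proof (intro allI impI)
    fix i assume "i < j"
    then have "Suc i \<le> M" using assms(2) by simp
    then have "q^Suc i \<noteq> 1" using assms(1)[of "Suc i"] by linarith
    then show "1 - q * q^i \<noteq> 0" by (metis power_Suc right_minus_eq)
  qed
  then show ?thesis unfolding qpoch_def by (simp add: prod_zero_iff)
qed

definition SS :: "'a::field \<Rightarrow> nat \<Rightarrow> nat \<Rightarrow> 'a" where
  "SS q a b = (\<Sum>k=1..a. (-1)^k * q^(Suc k choose 2) / ((1 - q^k) * qpoch q q (a-k) * qpoch q q (b+k)))"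
definition PP :: "'a::field \<Rightarrow> nat \<Rightarrow> nat \<Rightarrow> 'a" where
  "PP q a b = (\<Sum>k=1..a. (-1)^k * q^(k choose 2) / (qpoch q q (a-k) * qpoch q q (b+k)))"
definition RR :: "'a::field \<Rightarrow> nat \<Rightarrow> nat \<Rightarrow> 'a" where
  "RR q a b = (\<Sum>k=1..a. (-1)^k * q^(Suc k choose 2) / (qpoch q q (a-k) * qpoch q q (b+k)))"
definition HH :: "'a::field \<Rightarrow> nat \<Rightarrow> 'a" where
  "HH q n = (\<Sum>k=1..n. q^k / (1 - q^k))"

lemma addfr: fixes a b d1 d2 :: "'a::field" assumes "d1 \<noteq> 0" "d2 \<noteq> 0"
  shows "a/(d1*d2) + b/d2 = (a + b*d1)/(d1*d2)"
  using assms by (simp add: field_simps)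
lemma subfr: fixes a b d1 d2 :: "'a::field" assumes "d1 \<noteq> 0" "d2 \<noteq> 0"
  shows "a/(d1*d2) - b/d2 = (a - b*d1)/(d1*d2)"
  using assms by (simp add: field_simps)
lemma core2: fixes u v :: "'a::field" assumes "1-u \<noteq> 0" "1 - u*v \<noteq> 0"
  shows "(1-v)/((1-u)*(1-u*v)) + v/(1-u*v) = 1/(1-u)"
proof -
  have "(1-v)/((1-u)*(1-u*v)) + v/(1-u*v) = (1 - v + v*(1-u))/((1-u)*(1-u*v))"
    by (rule addfr[OF assms])
  also have "1 - v + v*(1-u) = 1*(1-u*v)" by (simp add: algebra_simps)
  also have "\<dots>/((1-u)*(1-u*v)) = 1/(1-u)" using assms by (simp add: mult.commute)
  finally show ?thesis .
qed
lemma alg2: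
  fixes u v s w A B :: "'a::field"
  assumes "u \<noteq> 1" "u*v \<noteq> 1" "A \<noteq> 0" "B \<noteq> 0"
  shows "(1-v)*(s*w/((1-u)*A*(B*(1-u*v)))) + v*(s*w/(A*(B*(1-u*v)))) = s*w/((1-u)*A*B)"
proof -
  have "(1-v)*(s*w/((1-u)*A*(B*(1-u*v)))) + v*(s*w/(A*(B*(1-u*v)))) =
     (s*w/(A*B)) * ((1-v)/((1-u)*(1-u*v)) + v/(1-u*v))"
    by (simp add: algebra_simps)
  also have "\<dots> = (s*w/(A*B)) * (1/(1-u))" using assms by (subst core2) auto
  also have "\<dots> = s*w/((1-u)*A*B)" by (simp add: algebra_simps)
  finally show ?thesis .
qed
lemma core1: fixes u v :: "'a::field" assumes "1-u \<noteq> 0" "1 - v \<noteq> 0"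
  shows "(1-u*v)*(u/((1-u)*(1-v))) - u*v/(1-v) = u/(1-u)"
proof -
  have "(1-u*v)*(u/((1-u)*(1-v))) - u*v/(1-v) = ((1-u*v)*u)/((1-u)*(1-v)) - u*v/(1-v)"
    by simp
  also have "\<dots> = ((1-u*v)*u - u*v*(1-u))/((1-u)*(1-v))"
    by (rule subfr[OF assms])
  also have "(1-u*v)*u - u*v*(1-u) = u*(1-v)" by (simp add: algebra_simps)
  also have "u*(1-v)/((1-u)*(1-v)) = u/(1-u)" using assms by simp
  finally show ?thesis .
qed
lemma alg1:
  fixes u v s w A B :: "'a::field"
  assumes "u \<noteq> 1" "v \<noteq> 1" "A \<noteq> 0" "B \<noteq> 0"
  shows "(1-u*v)*(s*(w*u)/((1-u)*(A*(1-v))*B)) - u*v*(s*w/((A*(1-v))*B)) = s*(w*u)/((1-u)*A*B)"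
proof -
  have "(1-u*v)*(s*(w*u)/((1-u)*(A*(1-v))*B)) - u*v*(s*w/((A*(1-v))*B)) =
     (s*w/(A*B)) * ((1-u*v)*(u/((1-u)*(1-v))) - u*v/(1-v))"
    by (simp add: algebra_simps)
  also have "\<dots> = (s*w/(A*B)) * (u/(1-u))" using assms by (subst core1) auto
  also have "\<dots> = s*(w*u)/((1-u)*A*B)" by (simp add: algebra_simps)
  finally show ?thesis .
qed
lemma alg1b:
  fixes u s w B :: "'a::field"
  assumes "u \<noteq> 1" "B \<noteq> 0"
  shows "(1-u)*(s*(w*u)/((1-u)*1*B)) - u*(s*w/(1*B)) = 0"
proof -
  have "1 - u \<noteq> 0" using assms by auto
  then have "(1-u)*(s*(w*u)/((1-u)*1*B)) = s*(w*u)/B" by simp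
  then show ?thesis by (simp add: algebra_simps)
qed

lemma choose2_Suc: "Suc k choose 2 = (k choose 2) + k"
  by (simp add: numeral_2_eq_2)

lemma L1:
  fixes q :: "'a::field"
  assumes nz: "\<And>k. 1 \<le> k \<Longrightarrow> k \<le> M \<Longrightarrow> q^k \<noteq> 1" and ab: "Suc a + b \<le> M"
  shows "(1 - q^Suc a) * SS q (Suc a) b - q^Suc a * PP q (Suc a) b = SS q a b"
proof -
  have "(1 - q^Suc a) * SS q (Suc a) b - q^Suc a * PP q (Suc a) b =
     (\<Sum>k=1..Suc a. (1 - q^Suc a) * ((-1)^k * q^(Suc k choose 2) / ((1 - q^k) * qpoch q q (Suc a-k) * qpoch q q (b+k)))
        - q^Suc a * ((-1)^k * q^(k choose 2) / (qpoch q q (Suc a-k) * qpoch q q (b+k))))"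
    by (simp only: SS_def PP_def sum_distrib_left sum_subtractf)
  also have "\<dots> = (\<Sum>k=1..Suc a. if k \<le> a then (-1)^k * q^(Suc k choose 2) / ((1 - q^k) * qpoch q q (a-k) * qpoch q q (b+k)) else 0)"
  proof (rule sum.cong[OF refl])
    fix k assume k: "k \<in> {1..Suc a}"
    have uq: "q^k \<noteq> 1" using k ab nz[of k] by auto
    have Bnz: "qpoch q q (b+k) \<noteq> 0" using k ab by (intro Q_nz[OF nz]) auto
    have ck: "q^(Suc k choose 2) = q^(k choose 2) * q^k" by (simp add: choose2_Suc power_add)
    show "(1 - q^Suc a) * ((-1)^k * q^(Suc k choose 2) / ((1 - q^k) * qpoch q q (Suc a-k) * qpoch q q (b+k)))
        - q^Suc a * ((-1)^k * q^(k choose 2) / (qpoch q q (Suc a-k) * qpoch q q (b+k))) =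
        (if k \<le> a then (-1)^k * q^(Suc k choose 2) / ((1 - q^k) * qpoch q q (a-k) * qpoch q q (b+k)) else 0)"
    proof (cases "k \<le> a")
      case True
      have e1: "Suc a - k = Suc (a - k)" using True by simp
      have e2: "q^Suc a = q^k * q^Suc (a-k)" using True by (simp add: power_add[symmetric])
      have vq: "q^Suc (a-k) \<noteq> 1" using True ab nz[of "Suc (a-k)"] by auto
      have Anz: "qpoch q q (a-k) \<noteq> 0" using ab by (intro Q_nz[OF nz]) auto
      show ?thesis using True unfolding e1 Q_Suc e2 ck
        using alg1[OF uq vq Anz Bnz, of "(-1)^k" "q^(k choose 2)"] by simp
    next
      case False
      then have kk: "k = Suc a" using k by simp
      have Q0: "qpoch q q 0 = 1" by (simp add: qpoch_def)
      have "(1 - q^Suc a) * ((-1)^k * q^(Suc k choose 2) / ((1 - q^k) * qpoch q q (Suc a-k) * qpoch q q (b+k)))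
        - q^Suc a * ((-1)^k * q^(k choose 2) / (qpoch q q (Suc a-k) * qpoch q q (b+k))) = 0"
        unfolding kk diff_self_eq_0 ck[unfolded kk] Q0
        by (rule alg1b[OF uq[unfolded kk] Bnz[unfolded kk]])
      then show ?thesis using False by simp
    qed
  qed
  also have "\<dots> = SS q a b"
    by (simp add: sum.cl_ivl_Suc SS_def)
  finally show ?thesis .
qed

lemma L2:
  fixes q :: "'a::field"
  assumes nz: "\<And>k. 1 \<le> k \<Longrightarrow> k \<le> M \<Longrightarrow> q^k \<noteq> 1" and ab: "a + Suc b \<le> M"
  shows "(1 - q^Suc b) * SS q a (Suc b) + q^Suc b * RR q a (Suc b) = SS q a b"
proof -
  have "(1 - q^Suc b) * SS q a (Suc b) + q^Suc b * RR q a (Suc b) =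
     (\<Sum>k=1..a. (1 - q^Suc b) * ((-1)^k * q^(Suc k choose 2) / ((1 - q^k) * qpoch q q (a-k) * qpoch q q (Suc b+k)))
        + q^Suc b * ((-1)^k * q^(Suc k choose 2) / (qpoch q q (a-k) * qpoch q q (Suc b+k))))"
    by (simp only: SS_def RR_def sum_distrib_left sum.distrib)
  also have "\<dots> = SS q a b" unfolding SS_def
  proof (rule sum.cong[OF refl])
    fix k assume k: "k \<in> {1..a}"
    have uq: "q^k \<noteq> 1" using k ab nz[of k] by auto
    have Bnz: "qpoch q q (b+k) \<noteq> 0" using k ab by (intro Q_nz[OF nz]) auto
    have Anz: "qpoch q q (a-k) \<noteq> 0" using k ab by (intro Q_nz[OF nz]) auto
    have e1: "Suc b + k = Suc (b + k)" by simp
    have e2: "q^Suc (b+k) = q^k * q^Suc b" by (simp add: power_add[symmetric] add.commute)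
    have "Suc (b+k) \<le> M" using k ab by simp
    then have "q^Suc (b+k) \<noteq> 1" using nz[of "Suc (b+k)"] by linarith
    then have uv: "q^k * q^Suc b \<noteq> 1" by (metis e2)
    show "(1 - q^Suc b) * ((-1)^k * q^(Suc k choose 2) / ((1 - q^k) * qpoch q q (a-k) * qpoch q q (Suc b+k)))
        + q^Suc b * ((-1)^k * q^(Suc k choose 2) / (qpoch q q (a-k) * qpoch q q (Suc b+k))) =
        (-1)^k * q^(Suc k choose 2) / ((1 - q^k) * qpoch q q (a-k) * qpoch q q (b+k))"
      unfolding e1 Q_Suc e2 using alg2[OF uq uv Anz Bnz, of "(-1)^k" "q^(Suc k choose 2)"] by simp
  qed
  finally show ?thesis .
qed

lemma alg_base:
  fixes u s h A :: "'a::field"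
  assumes "u \<noteq> 1" "A \<noteq> 0" "(1-u)*s - u*(-1/(A*(1-u))) = -h/A"
  shows "s = - (h + u/(1-u)) / (A*(1-u))"
proof -
  define d where "d = 1 - u"
  have d: "u = 1 - d" "d \<noteq> 0" using assms(1) unfolding d_def by simp_all
  have "d*s - (1-d)*(-1/(A*d)) = -h/A" using assms(3) unfolding d(1) by simp
  then have "d*s = -h/A - (1-d)/(A*d)" by (simp add: algebra_simps)
  then have "s = (-h/A - (1-d)/(A*d))/d" using d(2) by (simp add: field_simps)
  then show ?thesis unfolding d(1) using d(2) assms(2) by (simp add: field_simps)
qed

lemma alg_step:
  fixes u D hm hn A B :: "'a::field"
  assumes "u \<noteq> 1" "A \<noteq> 0" "B \<noteq> 0" "(1-u)*D = (hm - hn)/(A*B) + u/(A*(1-u)*B)"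
  shows "D = (hm + u/(1-u) - hn)/(A*(1-u)*B)"
proof -
  define d where "d = 1 - u"
  have d: "u = 1 - d" "d \<noteq> 0" using assms(1) unfolding d_def by simp_all
  have "d*D = (hm - hn)/(A*B) + (1-d)/(A*d*B)" using assms(4) unfolding d(1) by simp
  then have "D = ((hm - hn)/(A*B) + (1-d)/(A*d*B))/d" using d(2) by (simp add: field_simps)
  also have "\<dots> = (hm + (1-d)/(1-(1-d)) - hn)/(A*(1-(1-d))*B)"
    using d(2) assms(2,3) by (simp add: field_simps)
  finally show ?thesis unfolding d(1) .
qed



lemma core3: fixes u v :: "'a::field" assumes "1-u \<noteq> 0" "1 - v \<noteq> 0"
  shows "(1-u*v)/((1-u)*(1-v)) = 1/(1-u) + v/(1-v)"
proof -
  have "1/(1-u) + v/(1-v) = (1*(1-v) + v*(1-u))/((1-u)*(1-v))"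
    using assms by (simp add: field_simps)
  also have "1*(1-v) + v*(1-u) = 1 - u*v" by (simp add: algebra_simps)
  finally show ?thesis by simp
qed

lemma alg3:
  fixes u v C T A B :: "'a::field"
  assumes "u \<noteq> 1" "v \<noteq> 1" "A \<noteq> 0" "B \<noteq> 0"
  shows "C*(1-u*v)*T/(A*(1-u)*(B*(1-v))) = C*T/(A*(1-u)*B) + C*(T*v)/(A*(B*(1-v)))"
proof -
  have "C*(1-u*v)*T/(A*(1-u)*(B*(1-v))) = (C*T/(A*B)) * ((1-u*v)/((1-u)*(1-v)))"
    by (simp add: algebra_simps)
  also have "\<dots> = (C*T/(A*B)) * (1/(1-u) + v/(1-v))" using assms by (subst core3) auto
  also have "\<dots> = C*T/(A*(1-u)*B) + C*(T*v)/(A*(B*(1-v)))" by (simp add: algebra_simps)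
  finally show ?thesis .
qed

lemma qbin:
  fixes q x :: "'a::field"
  assumes nz: "\<And>k. 1 \<le> k \<Longrightarrow> k \<le> M \<Longrightarrow> q^k \<noteq> 1" and NM: "N \<le> M"
  shows "(\<Sum>j\<le>N. qpoch q q N * ((-1)^j * q^(j choose 2) * x^j) / (qpoch q q j * qpoch q q (N-j))) = qpoch x q N"
  using NM
proof (induction N)
  case 0 then show ?case by (simp add: qpoch_def numeral_2_eq_2)
next
  case (Suc N)
  define t where "t j = (-1)^j * q^(j choose 2) * x^j" for j
  define C where "C = qpoch q q N"
  have Q0: "qpoch q q 0 = 1" by (simp add: qpoch_def)
  have CS: "qpoch q q (Suc N) = C * (1 - q^Suc N)" by (simp add: C_def Q_Suc)
  have Qnz: "qpoch q q j \<noteq> 0" if "j \<le> Suc N" for j using that Suc.prems by (intro Q_nz[OF nz]) auto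
  have qnz: "q^j \<noteq> 1" if "1 \<le> j" "j \<le> Suc N" for j by (rule nz) (use that Suc.prems in auto)
  have tS: "t (Suc i) = - x * q^i * t i" for i by (simp add: t_def choose2_Suc power_add)
  let ?f = "\<lambda>j. C * t j / (qpoch q q j * qpoch q q (N-j))"
  have IH: "(\<Sum>j\<le>N. ?f j) = qpoch x q N" using Suc by (simp add: t_def C_def)
  have pw: "qpoch q q (Suc N) * t j / (qpoch q q j * qpoch q q (Suc N - j)) =
      (if j \<le> N then ?f j else 0) + (if j = 0 then 0 else - x * q^N * ?f (j - 1))"
    if j: "j \<le> Suc N" for j
  proof -
    consider "j = 0" | "j = Suc N" | i r where "j = Suc i" "N = i + Suc r"
    proof -
      assume h1: "j = 0 \<Longrightarrow> thesis" and h2: "j = Suc N \<Longrightarrow> thesis"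
        and h3: "\<And>i r. j = Suc i \<Longrightarrow> N = i + Suc r \<Longrightarrow> thesis"
      show thesis
      proof (cases "j = 0 \<or> j = Suc N")
        case True then show ?thesis using h1 h2 by blast
      next
        case False
        then obtain i where i: "j = Suc i" "i < N" using j by (cases j) simp_all
        obtain r where "N = Suc (i + r)" using less_imp_Suc_add[OF i(2)] by blast
        then have "N = i + Suc r" by simp
        then show ?thesis using h3 i by blast
      qed
    qed
    then show ?thesis
    proof cases
      case 1
      have "qpoch q q (Suc N) \<noteq> 0" "C \<noteq> 0" using Qnz C_def by auto
      then show ?thesis using 1 by (simp add: Q0 C_def)
    next
      case 2
      have "qpoch q q (Suc N) \<noteq> 0" "C \<noteq> 0" using Qnz C_def by auto
      then show ?thesis using 2 by (simp add: Q0 C_def tS)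
    next
      case 3
      define u where "u = q^Suc i"
      define v where "v = q^Suc r"
      have uv: "q^Suc N = u*v" by (simp add: u_def v_def 3 power_add[symmetric])
      have u1: "u \<noteq> 1" using qnz[of "Suc i"] 3 u_def by simp
      have v1: "v \<noteq> 1" using qnz[of "Suc r"] 3 v_def by simp
      have Anz: "qpoch q q i \<noteq> 0" using Qnz[of i] 3 by simp
      have Bnz: "qpoch q q r \<noteq> 0" using Qnz[of r] 3 by simp
      have e1: "Suc N - j = Suc r" "N - j = r" "N - (j - 1) = Suc r" using 3 by auto
      have Qi: "qpoch q q j = qpoch q q i * (1 - u)" using 3 by (simp add: Q_Suc u_def)
      have Qr: "qpoch q q (Suc r) = qpoch q q r * (1 - v)" by (simp add: Q_Suc v_def)
      have tt: "- x * q^N * t i = t j * v"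
        using 3 by (simp add: tS v_def power_add)
      have "qpoch q q (Suc N) * t j / (qpoch q q j * qpoch q q (Suc N - j))
          = C*(1-u*v)*t j/(qpoch q q i*(1-u)*(qpoch q q r*(1-v)))"
        unfolding CS e1 Qi Qr uv by simp
      also have "\<dots> = C*t j/(qpoch q q i*(1-u)*qpoch q q r) + C*(t j*v)/(qpoch q q i*(qpoch q q r*(1-v)))"
        by (rule alg3[OF u1 v1 Anz Bnz])
      also have "C*(t j*v)/(qpoch q q i*(qpoch q q r*(1-v))) = - x * q^N * ?f (j - 1)"
        unfolding e1 Qr tt[symmetric] using 3 by simp
      also have "C*t j/(qpoch q q i*(1-u)*qpoch q q r) = ?f j"
        unfolding e1 Qi by simp
      finally show ?thesis using 3 by simp
    qed
  qed
  have "(\<Sum>j\<le>Suc N. qpoch q q (Suc N) * t j / (qpoch q q j * qpoch q q (Suc N - j)))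
     = (\<Sum>j\<le>Suc N. (if j \<le> N then ?f j else 0)) + (\<Sum>j\<le>Suc N. (if j = 0 then 0 else - x * q^N * ?f (j - 1)))"
    unfolding sum.distrib[symmetric] by (rule sum.cong[OF refl]) (simp add: pw)
  also have "(\<Sum>j\<le>Suc N. (if j \<le> N then ?f j else 0)) = (\<Sum>j\<le>N. ?f j)" by simp
  also have "(\<Sum>j\<le>Suc N. (if j = 0 then 0 else - x * q^N * ?f (j - 1))) = - x*q^N * (\<Sum>j\<le>N. ?f j)"
    by (simp only: sum.atMost_Suc_shift) (simp add: sum_distrib_left)
  finally have X: "(\<Sum>j\<le>Suc N. qpoch q q (Suc N) * t j / (qpoch q q j * qpoch q q (Suc N - j)))
     = (\<Sum>j\<le>N. ?f j) + - x*q^N * (\<Sum>j\<le>N. ?f j)" .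
  have "(\<Sum>j\<le>Suc N. qpoch q q (Suc N) * ((-1)^j * q^(j choose 2) * x^j) / (qpoch q q j * qpoch q q (Suc N-j)))
     = (\<Sum>j\<le>Suc N. qpoch q q (Suc N) * t j / (qpoch q q j * qpoch q q (Suc N - j)))"
    by (simp only: t_def)
  also have "\<dots> = qpoch x q N + - x*q^N * qpoch x q N" by (simp only: X IH)
  also have "\<dots> = qpoch x q (Suc N)" by (simp add: qp_Suc algebra_simps)
  finally show ?case .
qed

lemma choose2_add: "(a+b) choose 2 = (a choose 2) + (b choose 2) + a*b"
  by (induction b) (simp_all add: choose2_Suc numeral_2_eq_2[symmetric])

lemma choose2_sq: "2*(a choose 2) + a = a*a"
  by (induction a) (simp_all add: choose2_Suc numeral_2_eq_2[symmetric] algebra_simps)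

lemma sum_split_add: fixes n m :: nat shows "(\<Sum>j\<le>n+m. f j) = (\<Sum>j\<le>n. f j) + (\<Sum>k=1..m. (f (n+k) :: 'a::comm_monoid_add))"
  by (induction m) (simp_all add: add.assoc)

lemma L3:
  fixes q :: "'a::field"
  assumes nz: "\<And>k. 1 \<le> k \<Longrightarrow> k \<le> M \<Longrightarrow> q^k \<noteq> 1" and mn: "m + n \<le> M" and m1: "1 \<le> m"
  shows "RR q n m + PP q m n = - 1 / (qpoch q q m * qpoch q q n)"
proof (cases "q = 0")
  case True
  have Q1: "qpoch q q j = 1" for j using True by (simp add: qpoch_def)
  have R0: "RR q n m = 0" unfolding RR_def Q1 using True by (intro sum.neutral) simp
  have "PP q m n = (\<Sum>k=1..m. (-1)^k * (0::'a)^(k choose 2))" unfolding PP_def Q1 using True by simp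
  also have "\<dots> = (-1)^1 * (0::'a)^(1 choose 2) + (\<Sum>k=Suc 1..m. (-1)^k * (0::'a)^(k choose 2))"
    using m1 by (rule sum.atLeast_Suc_atMost)
  also have "(\<Sum>k=Suc 1..m. (-1)^k * (0::'a)^(k choose 2)) = 0"
  proof (rule sum.neutral, rule ballI)
    fix k assume "k \<in> {Suc 1..m}"
    then have "0 < k choose 2" by simp
    then show "(-1)^k * (0::'a)^(k choose 2) = 0" by simp
  qed
  finally show ?thesis using R0 by (simp add: Q1 numeral_2_eq_2)
next
  case False
  define N where "N = n + m"
  define x where "x = inverse (q^n)"
  define g where "g j = (-1)^j * q^(j choose 2) * x^j / (qpoch q q j * qpoch q q (N-j))" for j
  define K where "K = (-1)^n * q^(Suc n choose 2)"
  have NM: "N \<le> M" using mn N_def by simp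
  have QN: "qpoch q q N \<noteq> 0" by (rule Q_nz[OF nz NM])
  have Qnz: "qpoch q q j \<noteq> 0" if "j \<le> N" for j using that NM by (intro Q_nz[OF nz]) auto
  have qn: "q^n \<noteq> 0" using False by simp
  have "qpoch x q N = 0"
  proof -
    have "n \<in> {..<N}" using N_def m1 by simp
    moreover have "1 - x * q^n = 0" using qn x_def by simp
    ultimately show ?thesis unfolding qpoch_def by (meson finite_lessThan prod_zero_iff)
  qed
  then have "qpoch q q N * (\<Sum>j\<le>N. g j) = 0"
    using qbin[OF nz NM, of x] by (simp add: g_def sum_distrib_left)
  then have G0: "(\<Sum>j\<le>N. g j) = 0" using QN by simp
  have T1: "K * g (n - k) = (-1)^k * q^(Suc k choose 2) / (qpoch q q (n-k) * qpoch q q (m+k))" if "k \<le> n" for k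
  proof -
    define j where "j = n - k"
    have nj: "n = j + k" using that j_def by simp
    have Nj: "N - j = m + k" using N_def nj by simp
    have sg: "(-1::'a)^n * (-1)^j = (-1)^k"
      unfolding nj power_add by (simp add: algebra_simps power_mult_distrib[symmetric])
    have ce: "(Suc n choose 2) + (j choose 2) = n*j + (Suc k choose 2)"
    proof -
      have "Suc n choose 2 = (j + Suc k) choose 2" using nj by simp
      also have "\<dots> = (j choose 2) + (Suc k choose 2) + j * Suc k" by (rule choose2_add)
      finally have "(Suc n choose 2) + (j choose 2) = 2*(j choose 2) + j + (Suc k choose 2) + j*k" by simp
      also have "\<dots> = j*j + (Suc k choose 2) + j*k" using choose2_sq[of j] by simp
      finally show ?thesis unfolding nj by (simp add: algebra_simps)
    qed
    have pe: "q^(Suc n choose 2) * q^(j choose 2) * x^j = q^(Suc k choose 2)"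
    proof -
      have "q^(Suc n choose 2) * q^(j choose 2) = q^(n*j + (Suc k choose 2))"
        by (simp only: power_add[symmetric] ce)
      also have "\<dots> = (q^n)^j * q^(Suc k choose 2)" by (simp only: power_add power_mult)
      finally have "q^(Suc n choose 2) * q^(j choose 2) * x^j = (q^n)^j * x^j * q^(Suc k choose 2)"
        by (simp add: algebra_simps)
      also have "(q^n)^j * x^j = 1" unfolding x_def using qn by (simp add: power_mult_distrib[symmetric])
      finally show ?thesis by simp
    qed
    have "K * g (n - k) = ((-1)^n * (-1)^j) * (q^(Suc n choose 2) * q^(j choose 2) * x^j) / (qpoch q q j * qpoch q q (N-j))"
      unfolding K_def g_def j_def[symmetric] by (simp add: algebra_simps)
    also have "\<dots> = (-1)^k * q^(Suc k choose 2) / (qpoch q q (n-k) * qpoch q q (m+k))"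
      unfolding sg pe Nj unfolding j_def ..
    finally show ?thesis .
  qed
  have T2: "K * g (n + k) = (-1)^k * q^(k choose 2) / (qpoch q q (m-k) * qpoch q q (n+k))" if "k \<le> m" for k
  proof -
    define j where "j = n + k"
    have Nj: "N - j = m - k" using N_def j_def by simp
    have sg: "(-1::'a)^n * (-1)^j = (-1)^k"
      unfolding j_def power_add by (simp add: algebra_simps power_mult_distrib[symmetric])
    have ce: "(Suc n choose 2) + (j choose 2) = n*j + (k choose 2)"
    proof -
      have "j choose 2 = (n choose 2) + (k choose 2) + n*k" unfolding j_def by (rule choose2_add)
      moreover have "Suc n choose 2 = (n choose 2) + n" by (rule choose2_Suc)
      ultimately have "(Suc n choose 2) + (j choose 2) = 2*(n choose 2) + n + (k choose 2) + n*k" by simp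
      also have "\<dots> = n*n + (k choose 2) + n*k" using choose2_sq[of n] by simp
      finally show ?thesis unfolding j_def by (simp add: algebra_simps)
    qed
    have pe: "q^(Suc n choose 2) * q^(j choose 2) * x^j = q^(k choose 2)"
    proof -
      have "q^(Suc n choose 2) * q^(j choose 2) = q^(n*j + (k choose 2))"
        by (simp only: power_add[symmetric] ce)
      also have "\<dots> = (q^n)^j * q^(k choose 2)" by (simp only: power_add power_mult)
      finally have "q^(Suc n choose 2) * q^(j choose 2) * x^j = (q^n)^j * x^j * q^(k choose 2)"
        by (simp add: algebra_simps)
      also have "(q^n)^j * x^j = 1" unfolding x_def using qn by (simp add: power_mult_distrib[symmetric])
      finally show ?thesis by simp
    qed
    have "K * g (n + k) = ((-1)^n * (-1)^j) * (q^(Suc n choose 2) * q^(j choose 2) * x^j) / (qpoch q q j * qpoch q q (N-j))"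
      unfolding K_def g_def j_def[symmetric] by (simp add: algebra_simps)
    also have "\<dots> = (-1)^k * q^(k choose 2) / (qpoch q q (m-k) * qpoch q q (n+k))"
      unfolding sg pe Nj unfolding j_def by (simp add: mult.commute)
    finally show ?thesis .
  qed
  have "0 = K * (\<Sum>j\<le>N. g j)" using G0 by simp
  also have "\<dots> = (\<Sum>j\<le>n. K * g j) + (\<Sum>k=1..m. K * g (n+k))"
    unfolding N_def sum_split_add by (simp add: sum_distrib_left distrib_left)
  also have "(\<Sum>j\<le>n. K * g j) = (\<Sum>k\<le>n. K * g (n - k))"
    using sum.atLeastAtMost_rev[of "\<lambda>j. K * g j" 0 n] by (simp add: atLeast0AtMost)
  also have "\<dots> = (\<Sum>k\<le>n. (-1)^k * q^(Suc k choose 2) / (qpoch q q (n-k) * qpoch q q (m+k)))"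
    using T1 by simp
  also have "\<dots> = 1 / (qpoch q q n * qpoch q q m) + RR q n m"
    unfolding RR_def atLeast0AtMost[symmetric]
    by (subst sum.atLeast_Suc_atMost) (simp_all add: numeral_2_eq_2 add.commute)
  also have "(\<Sum>k=1..m. K * g (n+k)) = PP q m n"
    unfolding PP_def using T2 by simp
  finally have "0 = 1 / (qpoch q q n * qpoch q q m) + RR q n m + PP q m n" .
  then show ?thesis by (simp add: algebra_simps eq_neg_iff_add_eq_0 mult.commute)
qed


lemma HH_Suc: "HH q (Suc n) = HH q n + q^Suc n / (1 - q^Suc n)"
  by (simp add: HH_def)

lemma base:
  fixes q :: "'a::field"
  assumes nz: "\<And>k. 1 \<le> k \<Longrightarrow> k \<le> M \<Longrightarrow> q^k \<noteq> 1"
  shows "n \<le> M \<Longrightarrow> SS q n 0 = - HH q n / qpoch q q n"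
proof (induction n)
  case 0 then show ?case by (simp add: SS_def HH_def)
next
  case (Suc n)
  have L1': "(1 - q^Suc n) * SS q (Suc n) 0 - q^Suc n * PP q (Suc n) 0 = SS q n 0"
    using Suc.prems by (intro L1[OF nz]) auto
  have L3': "RR q 0 (Suc n) + PP q (Suc n) 0 = - 1 / (qpoch q q (Suc n) * qpoch q q 0)"
    using Suc.prems by (intro L3[OF nz]) auto
  have P: "PP q (Suc n) 0 = - 1 / (qpoch q q n * (1 - q^Suc n))"
    using L3' by (simp add: RR_def Q_Suc qpoch_def[of _ _ 0])
  have u1: "q^Suc n \<noteq> 1" by (rule nz) (use Suc.prems in auto)
  have A: "qpoch q q n \<noteq> 0" by (rule Q_nz[OF nz]) (use Suc.prems in auto)
  have "(1 - q^Suc n) * SS q (Suc n) 0 - q^Suc n * (-1/(qpoch q q n * (1 - q^Suc n))) = - HH q n / qpoch q q n"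
    using L1' Suc by (simp add: P)
  then have "SS q (Suc n) 0 = - (HH q n + q^Suc n/(1-q^Suc n)) / (qpoch q q n*(1-q^Suc n))"
    by (rule alg_base[OF u1 A])
  then show ?case by (simp only: HH_Suc Q_Suc)
qed

lemma mainS:
  fixes q :: "'a::field"
  assumes nz: "\<And>k. 1 \<le> k \<Longrightarrow> k \<le> M \<Longrightarrow> q^k \<noteq> 1"
  shows "m + n \<le> M \<Longrightarrow> SS q n m - SS q m n = (HH q m - HH q n) / (qpoch q q m * qpoch q q n)"
proof (induction m)
  case 0 then show ?case using base[OF nz, of n] by (simp add: SS_def HH_def qpoch_def)
next
  case (Suc m)
  have L2': "(1 - q^Suc m) * SS q n (Suc m) + q^Suc m * RR q n (Suc m) = SS q n m"
    using Suc.prems by (intro L2[OF nz]) auto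
  have L1': "(1 - q^Suc m) * SS q (Suc m) n - q^Suc m * PP q (Suc m) n = SS q m n"
    using Suc.prems by (intro L1[OF nz]) auto
  have L3': "RR q n (Suc m) + PP q (Suc m) n = - 1 / (qpoch q q (Suc m) * qpoch q q n)"
    using Suc.prems by (intro L3[OF nz]) auto
  have IH: "SS q n m - SS q m n = (HH q m - HH q n) / (qpoch q q m * qpoch q q n)"
    using Suc by simp
  have u1: "q^Suc m \<noteq> 1" by (rule nz) (use Suc.prems in auto)
  have A: "qpoch q q m \<noteq> 0" by (rule Q_nz[OF nz]) (use Suc.prems in auto)
  have B: "qpoch q q n \<noteq> 0" by (rule Q_nz[OF nz]) (use Suc.prems in auto)
  have "(1 - q^Suc m) * (SS q n (Suc m) - SS q (Suc m) n)
     = (SS q n m - SS q m n) - q^Suc m * (RR q n (Suc m) + PP q (Suc m) n)"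
    unfolding L1'[symmetric] L2'[symmetric] by (simp add: algebra_simps)
  also have "\<dots> = (HH q m - HH q n) / (qpoch q q m * qpoch q q n) + q^Suc m / (qpoch q q m * (1 - q^Suc m) * qpoch q q n)"
    unfolding IH L3' by (simp add: Q_Suc)
  finally have "SS q n (Suc m) - SS q (Suc m) n = (HH q m + q^Suc m/(1-q^Suc m) - HH q n)/(qpoch q q m*(1-q^Suc m)*qpoch q q n)"
    by (rule alg_step[OF u1 A B])
  then show ?case by (simp only: HH_Suc Q_Suc)
qed


lemma den:
  fixes q :: "'a::field"
  assumes "1 \<le> k"
  shows "qpoch q q k * qpoch q q (n - k) * qpoch (q^k) q (m + 1) = (1 - q^k) * qpoch q q (n-k) * qpoch q q (m+k)"
proof -
  obtain k' where k: "k = Suc k'" using assms by (cases k) auto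
  have mk: "m + k = k' + (m+1)" using k by simp
  have e: "qpoch q q k' * qpoch (q^Suc k') q (m+1) = qpoch q q (m+k)" unfolding mk by (rule Q_shift)
  have "qpoch q q k * qpoch q q (n - k) * qpoch (q^k) q (m + 1)
     = (1 - q^k) * qpoch q q (n-k) * (qpoch q q k' * qpoch (q^Suc k') q (m+1))"
    unfolding k Q_Suc by (simp only: mult.commute mult.left_commute)
  then show ?thesis unfolding e .
qed

theorem corollary6p3:
  fixes q :: "'a::field_char_0" and m n :: nat
  assumes "\<And>k. 1 \<le> k \<Longrightarrow> k \<le> m + n \<Longrightarrow> q ^ k \<noteq> 1"
  shows "(\<Sum>k=1..n. (-1) ^ k * q ^ (Suc k choose 2) /
            (qpoch q q k * qpoch q q (n - k) * qpoch (q ^ k) q (m + 1)))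
       - (\<Sum>k=1..m. (-1) ^ k * q ^ (Suc k choose 2) /
            (qpoch q q k * qpoch q q (m - k) * qpoch (q ^ k) q (n + 1)))
       = 1 / (qpoch q q m * qpoch q q n) *
         ((\<Sum>k=1..m. q ^ k / (1 - q ^ k)) - (\<Sum>k=1..n. q ^ k / (1 - q ^ k)))"
proof -
  have s1: "(\<Sum>k=1..n. (-1) ^ k * q ^ (Suc k choose 2) /
            (qpoch q q k * qpoch q q (n - k) * qpoch (q ^ k) q (m + 1))) = SS q n m"
    unfolding SS_def
  proof (rule sum.cong[OF refl])
    fix k assume "k \<in> {1..n}"
    then have "1 \<le> k" by simp
    then show "(-1) ^ k * q ^ (Suc k choose 2) / (qpoch q q k * qpoch q q (n - k) * qpoch (q ^ k) q (m + 1))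
      = (-1) ^ k * q ^ (Suc k choose 2) / ((1 - q^k) * qpoch q q (n - k) * qpoch q q (m + k))"
      by (simp only: den)
  qed
  have s2: "(\<Sum>k=1..m. (-1) ^ k * q ^ (Suc k choose 2) /
            (qpoch q q k * qpoch q q (m - k) * qpoch (q ^ k) q (n + 1))) = SS q m n"
    unfolding SS_def
  proof (rule sum.cong[OF refl])
    fix k assume "k \<in> {1..m}"
    then have "1 \<le> k" by simp
    then show "(-1) ^ k * q ^ (Suc k choose 2) / (qpoch q q k * qpoch q q (m - k) * qpoch (q ^ k) q (n + 1))
      = (-1) ^ k * q ^ (Suc k choose 2) / ((1 - q^k) * qpoch q q (m - k) * qpoch q q (n + k))"
      by (simp only: den)
  qed
  have "SS q n m - SS q m n = (HH q m - HH q n) / (qpoch q q m * qpoch q q n)"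
    using mainS[OF assms order_refl] .
  then show ?thesis unfolding s1 s2 HH_def by simp
qed

end
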